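(* Define $\mathrm{CS}:Q\to\mathbb{R}$ by $\mathrm{CS}(q)=\int_{p(q)/q}^{1}(vq-p(q))f(v)\,dv$. Then $\mathrm{CS}$ is convex on $Q$ if and only if \[ r(v)r''(v)+r'(v)\le 1 \quad\text{for all } v\in\big(\overline p(q_h),\overline p(q_\ell)\big). \]
   Context: Let $0<q_\ell<q_h<\infty$, $Q=[q_\ell,q_h]$, and let $c$ be a real number with $0<c<q_\ell$. Let $F$ be a probability distribution on $[0,1]$ with support $[0,1]$ admitting a twice continuously differentiable density $f:(0,1)\to\mathbb{R}_{>0}$. Define $r(v)=(1-F(v))/f(v)$ and $\psi(v)=v-r(v)$ on $(0,1)$, and assume $\psi'(v)>0$ whenever $\psi(v)>0$. For $q\in Q$, $p(q)$ is the unique maximizer over $p\in\mathbb{R}$ of $(p-c)\big(1-F(p/q)\big)$, and $\overline p(q)=p(q)/q$. *)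

theory Defs
  imports "HOL-Analysis.Analysis"
begin

definition profit :: "(real \<Rightarrow> real) \<Rightarrow> real \<Rightarrow> real \<Rightarrow> real \<Rightarrow> real" where
  "profit F c q p = (p - c) * (1 - F (p / q))"

definition opt_price :: "(real \<Rightarrow> real) \<Rightarrow> real \<Rightarrow> real \<Rightarrow> real" where
  "opt_price F c q = (THE p. \<forall>p'. profit F c q p' \<le> profit F c q p)"

definition opt_price_bar :: "(real \<Rightarrow> real) \<Rightarrow> real \<Rightarrow> real \<Rightarrow> real" where
  "opt_price_bar F c q = opt_price F c q / q"

definition inv_hazard :: "(real \<Rightarrow> real) \<Rightarrow> (real \<Rightarrow> real) \<Rightarrow> real \<Rightarrow> real" where
  "inv_hazard F f v = (1 - F v) / f v"

definition virt_val :: "(real \<Rightarrow> real) \<Rightarrow> (real \<Rightarrow> real) \<Rightarrow> real \<Rightarrow> real" where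
  "virt_val F f v = v - inv_hazard F f v"

definition CS :: "(real \<Rightarrow> real) \<Rightarrow> (real \<Rightarrow> real) \<Rightarrow> real \<Rightarrow> real \<Rightarrow> real" where
  "CS F f c q = integral {opt_price F c q / q..1} (\<lambda>v. (v * q - opt_price F c q) * f v)"

end

theory Submission imports Defs begin

locale setting =
  fixes F f :: "real \<Rightarrow> real" and c :: real
  assumes c_pos: "0 < c"
    and F_cont: "continuous_on UNIV F"
    and F_low: "\<And>v. v \<le> 0 \<Longrightarrow> F v = 0"
    and F_high: "\<And>v. 1 \<le> v \<Longrightarrow> F v = 1"
    and F_dens: "\<And>v. v \<in> {0<..<1} \<Longrightarrow> (F has_real_derivative f v) (at v)"
    and f_pos: "\<And>v. v \<in> {0<..<1} \<Longrightarrow> f v > 0"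
    and f_diff: "\<And>v. v \<in> {0<..<1} \<Longrightarrow> f differentiable (at v)"
    and f'_diff: "\<And>v. v \<in> {0<..<1} \<Longrightarrow> (deriv f) differentiable (at v)"
    and psi_mono: "\<And>v. v \<in> {0<..<1} \<Longrightarrow> virt_val F f v > 0 \<Longrightarrow>
                     deriv (virt_val F f) v > 0"
begin

abbreviation "r \<equiv> inv_hazard F f"
abbreviation "r1 \<equiv> deriv r"
abbreviation "r2 \<equiv> deriv r1"
abbreviation "\<psi> \<equiv> virt_val F f"
abbreviation "\<psi>1 \<equiv> deriv \<psi>"

lemma F_isCont: "isCont F x"
  using F_cont by (simp add: continuous_on_eq_continuous_at)

lemma F_bounds: "v \<in> {0<..<1} \<Longrightarrow> 0 < F v \<and> F v < 1"
proof -
  assume v: "v \<in> {0<..<1}"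
  have cont: "continuous_on A F" for A using F_cont continuous_on_subset by blast
  have d: "\<exists>y. DERIV F x :> y \<and> y > 0" if "0 < x" "x < 1" for x
    using F_dens[of x] f_pos[of x] that by auto
  have "F 0 < F v"
    by (rule DERIV_pos_imp_increasing_open[OF _ _ cont]) (use v d in auto)
  moreover have "F v < F 1"
    by (rule DERIV_pos_imp_increasing_open[OF _ _ cont]) (use v d in auto)
  ultimately show ?thesis using F_low[of 0] F_high[of 1] by simp
qed

lemma F_le1: "F v \<le> 1"
  using F_bounds[of v] F_low[of v] F_high[of v] by (cases "v \<le> 0"; cases "1 \<le> v") auto

lemma F_ge0: "0 \<le> F v"
  using F_bounds[of v] F_low[of v] F_high[of v] by (cases "v \<le> 0"; cases "1 \<le> v") auto

lemma r_pos: "v \<in> {0<..<1} \<Longrightarrow> r v > 0"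
  using F_bounds[of v] f_pos[of v] by (simp add: inv_hazard_def)

lemma one_minus_F: "v \<in> {0<..<1} \<Longrightarrow> 1 - F v = r v * f v"
  using f_pos[of v] by (simp add: inv_hazard_def)

lemma f_deriv: "v \<in> {0<..<1} \<Longrightarrow> DERIV f v :> deriv f v"
  using f_diff DERIV_deriv_iff_real_differentiable by blast

definition E :: "real \<Rightarrow> real" where
  "E v = (- f v * f v - (1 - F v) * deriv f v) / (f v * f v)"

lemma r_deriv_E: "v \<in> {0<..<1} \<Longrightarrow> DERIV r v :> E v"
proof -
  assume v: "v \<in> {0<..<1}"
  have "DERIV (\<lambda>v. (1 - F v) / f v) v :> ((0 - f v) * f v - (1 - F v) * deriv f v) / (f v * f v)"
    by (intro DERIV_divide DERIV_diff DERIV_const F_dens f_deriv v) (use f_pos[OF v] in auto)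
  then show ?thesis unfolding inv_hazard_def[abs_def] E_def by simp
qed

lemma r1_eq: "v \<in> {0<..<1} \<Longrightarrow> r1 v = E v"
  using r_deriv_E DERIV_imp_deriv by blast

lemma r_deriv: "v \<in> {0<..<1} \<Longrightarrow> DERIV r v :> r1 v"
  using r_deriv_E r1_eq by simp

lemma E_diff: "v \<in> {0<..<1} \<Longrightarrow> E differentiable (at v)"
proof -
  assume v: "v \<in> {0<..<1}"
  have dF: "F differentiable (at v)" using F_dens[OF v] real_differentiable_def by blast
  show ?thesis unfolding E_def[abs_def]
    by (intro differentiable_divide differentiable_diff differentiable_mult differentiable_minus
        differentiable_const dF f_diff f'_diff v) (use f_pos[OF v] in auto)
qed

lemma r1_diff: "v \<in> {0<..<1} \<Longrightarrow> r1 differentiable (at v)"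
proof -
  assume v: "v \<in> {0<..<1}"
  obtain D where "DERIV E v :> D" using E_diff[OF v] real_differentiable_def by blast
  then have "DERIV r1 v :> D"
    by (rule has_field_derivative_transform_within_open[where S="{0<..<1}"]) (use v r1_eq in auto)
  then show ?thesis using real_differentiable_def by blast
qed

lemma r1_deriv: "v \<in> {0<..<1} \<Longrightarrow> DERIV r1 v :> r2 v"
  using r1_diff DERIV_deriv_iff_real_differentiable by blast

lemma psi_eq: "\<psi> v = v - r v" by (simp add: virt_val_def)

lemma psi_deriv: "v \<in> {0<..<1} \<Longrightarrow> DERIV \<psi> v :> 1 - r1 v"
proof -
  assume v: "v \<in> {0<..<1}"
  have "DERIV (\<lambda>v. v - r v) v :> 1 - r1 v"
    by (intro DERIV_diff DERIV_ident r_deriv v)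
  then show ?thesis unfolding virt_val_def[abs_def] by simp
qed

lemma psi1_eq: "v \<in> {0<..<1} \<Longrightarrow> \<psi>1 v = 1 - r1 v"
  using psi_deriv DERIV_imp_deriv by blast

lemma psi_deriv': "v \<in> {0<..<1} \<Longrightarrow> DERIV \<psi> v :> \<psi>1 v"
  using psi_deriv psi1_eq by simp

lemma psi1_deriv: "v \<in> {0<..<1} \<Longrightarrow> DERIV \<psi>1 v :> - r2 v"
proof -
  assume v: "v \<in> {0<..<1}"
  have "DERIV (\<lambda>v. 1 - r1 v) v :> 0 - r2 v"
    by (intro DERIV_diff DERIV_const r1_deriv v)
  then have "DERIV (\<lambda>v. 1 - r1 v) v :> - r2 v" by simp
  then show ?thesis
    by (rule has_field_derivative_transform_within_open[where S="{0<..<1}"]) (use v psi1_eq in auto)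
qed

lemma psi_isCont: "v \<in> {0<..<1} \<Longrightarrow> isCont \<psi> v"
  using psi_deriv DERIV_isCont by blast

lemma psi_lt: "v \<in> {0<..<1} \<Longrightarrow> \<psi> v < v"
  using r_pos psi_eq by simp


lemma psi_cont_on: "{a..b} \<subseteq> {0<..<1} \<Longrightarrow> continuous_on {a..b} \<psi>"
  using psi_isCont by (meson continuous_at_imp_continuous_on subsetD)

lemma psi_mono_weak:
  assumes a: "0 < a" and pa: "\<psi> a > 0" and ax: "a \<le> x" and x1: "x < 1"
  shows "\<psi> a \<le> \<psi> x"
proof (rule ccontr)
  assume "\<not> \<psi> a \<le> \<psi> x"
  then have lt: "\<psi> x < \<psi> a" by simp
  define L where "L = {y \<in> {a..x}. (\<lambda>_. \<psi> a) y \<le> \<psi> y}"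
  have pc: "continuous_on {a..x} \<psi>" by (rule psi_cont_on) (use a x1 in auto)
  have "closed L" unfolding L_def
    by (rule continuous_on_closed_Collect_le) (use pc in \<open>auto intro: continuous_on_const\<close>)
  moreover have "bounded L" unfolding L_def by (rule bounded_subset[of "{a..x}"]) auto
  ultimately have "compact L" using compact_eq_bounded_closed by blast
  moreover have "a \<in> L" unfolding L_def using ax by auto
  ultimately obtain s where sL: "s \<in> L" and smax: "\<And>t. t \<in> L \<Longrightarrow> t \<le> s"
    using compact_attains_sup[of L] by blast
  have s: "a \<le> s" "s \<le> x" "\<psi> a \<le> \<psi> s" using sL unfolding L_def by auto
  have "s \<noteq> x" using s lt by auto
  with s have sx: "s < x" by simp
  have s01: "s \<in> {0<..<1}" using s a x1 by auto
  have "\<psi>1 s > 0" using psi_mono[OF s01] s pa by simp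
  from DERIV_pos_inc_right[OF psi_deriv'[OF s01] this] obtain d where
    d: "d > 0" "\<And>h. h > 0 \<Longrightarrow> h < d \<Longrightarrow> \<psi> s < \<psi> (s + h)" by blast
  define h where "h = min d (x - s) / 2"
  have h: "h > 0" "h < d" "s + h \<le> x" unfolding h_def using d(1) sx by (auto simp: min_def field_simps)
  have "\<psi> a \<le> \<psi> (s + h)" using d(2)[OF h(1,2)] s by simp
  then have "s + h \<in> L" unfolding L_def using h s by auto
  then show False using smax h by fastforce
qed

lemma psi_mono_strict:
  assumes a: "0 < a" and pa: "\<psi> a > 0" and ax: "a < x" and x1: "x < 1"
  shows "\<psi> a < \<psi> x"
proof -
  have a01: "a \<in> {0<..<1}" using a ax x1 by auto
  have "\<psi>1 a > 0" using psi_mono[OF a01] pa by simp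
  from DERIV_pos_inc_right[OF psi_deriv'[OF a01] this] obtain d where
    d: "d > 0" "\<And>h. h > 0 \<Longrightarrow> h < d \<Longrightarrow> \<psi> a < \<psi> (a + h)" by blast
  define h where "h = min d (x - a) / 2"
  have h: "h > 0" "h < d" "a + h \<le> x" unfolding h_def using d(1) ax by (auto simp: min_def field_simps)
  have "\<psi> a < \<psi> (a + h)" using d(2)[OF h(1,2)] by simp
  also have "\<dots> \<le> \<psi> x" by (rule psi_mono_weak) (use h a pa x1 \<open>\<psi> a < \<psi> (a + h)\<close> in auto)
  finally show ?thesis .
qed

lemma psi_inj:
  assumes "v \<in> {0<..<1}" "w \<in> {0<..<1}" "\<psi> v = \<psi> w" "\<psi> v > 0"
  shows "v = w"
  using psi_mono_strict[of v w] psi_mono_strict[of w v] assms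
  by (cases v w rule: linorder_cases) auto


lemma profit_foc:
  assumes q: "c < q" and pmax: "\<forall>p'. profit F c q p' \<le> profit F c q p"
  shows "p / q \<in> {0<..<1} \<and> \<psi> (p / q) = c / q"
proof -
  let ?P = "profit F c q"
  have qpos: "q > 0" using q c_pos by simp
  define m where "m = (c + q) / 2"
  have m01: "m / q \<in> {0<..<1}" using q c_pos by (auto simp: m_def field_simps)
  have Pm: "?P m > 0" using F_bounds[OF m01] q by (auto simp: profit_def m_def)
  have Pp: "?P p > 0" using pmax Pm by (meson less_le_trans)
  have pc: "p > c"
  proof (rule ccontr)
    assume "\<not> p > c"
    then have "?P p \<le> 0" unfolding profit_def using F_le1[of "p/q"]
      by (intro mult_nonpos_nonneg) auto
    with Pp show False by simp
  qed
  have pq: "p < q"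
  proof (rule ccontr)
    assume "\<not> p < q"
    then have "1 \<le> p / q" using qpos by (simp add: field_simps)
    then have "?P p = 0" unfolding profit_def using F_high by simp
    with Pp show False by simp
  qed
  define v where "v = p / q"
  have v01: "v \<in> {0<..<1}" using pc pq qpos c_pos by (auto simp: v_def field_simps)
  have dq: "DERIV (\<lambda>p. p / q) p :> 1 / q"
    using DERIV_cdivide[OF DERIV_ident, of q p] by simp
  have dF: "DERIV (\<lambda>p. F (p / q)) p :> f v * (1 / q)"
    using DERIV_chain2[OF F_dens[OF v01[unfolded v_def]] dq] by (simp add: v_def)
  have "DERIV ?P p :> (1 - 0) * (1 - F (p / q)) + (0 - f v * (1 / q)) * (p - c)"
    unfolding profit_def[abs_def]
    by (intro DERIV_mult DERIV_diff DERIV_ident DERIV_const dF)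
  then have "(1 - 0) * (1 - F (p / q)) + (0 - f v * (1 / q)) * (p - c) = 0"
    by (rule DERIV_local_max[of _ _ _ 1]) (use pmax in auto)
  then have "1 - F v = f v * (p - c) / q" by (simp add: v_def[symmetric])
  then have "r v * f v = ((p - c) / q) * f v" using one_minus_F[OF v01] by simp
  then have "r v = (p - c) / q" using f_pos[OF v01] by (metis mult_cancel_right order_less_irrefl)
  then have "\<psi> v = p / q - (p - c) / q" by (simp add: psi_eq v_def)
  also have "\<dots> = c / q" by (simp add: diff_divide_distrib)
  finally have "\<psi> v = c / q" .
  then show ?thesis using v01 v_def by simp
qed

lemma opt_price_char:
  assumes q: "c < q"
  shows "opt_price F c q / q \<in> {0<..<1} \<and> \<psi> (opt_price F c q / q) = c / q"
proof -
  let ?P = "profit F c q"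
  have qpos: "q > 0" using q c_pos by simp
  have Pcont: "continuous_on {c..q} ?P"
  proof -
    have "isCont ?P x" for x
    proof -
      have "isCont (\<lambda>p. F (p / q)) x"
        by (rule isCont_o2[OF _ F_isCont]) (use qpos in \<open>auto intro!: continuous_intros\<close>)
      then show ?thesis unfolding profit_def[abs_def] by (intro continuous_intros)
    qed
    then show ?thesis by (simp add: continuous_at_imp_continuous_on)
  qed
  obtain p0 where p0: "p0 \<in> {c..q}" "\<And>y. y \<in> {c..q} \<Longrightarrow> ?P y \<le> ?P p0"
    using continuous_attains_sup[OF compact_Icc _ Pcont] q by auto
  define m where "m = (c + q) / 2"
  have m01: "m / q \<in> {0<..<1}" using q c_pos by (auto simp: m_def field_simps)
  have Pm: "?P m > 0" using F_bounds[OF m01] q by (auto simp: profit_def m_def)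
  have "?P m \<le> ?P p0" using p0(2)[of m] q by (simp add: m_def)
  have glob: "\<forall>p'. ?P p' \<le> ?P p0"
  proof
    fix p'
    show "?P p' \<le> ?P p0"
    proof (cases "p' \<in> {c..q}")
      case True then show ?thesis using p0 by blast
    next
      case False
      have "?P p' \<le> 0"
      proof (cases "p' < c")
        case True
        then show ?thesis unfolding profit_def using F_le1[of "p'/q"]
          by (intro mult_nonpos_nonneg) auto
      next
        case False
        with \<open>p' \<notin> {c..q}\<close> have "q < p'" by auto
        then have "1 \<le> p' / q" using qpos by (simp add: field_simps)
        then show ?thesis unfolding profit_def using F_high by simp
      qed
      then show ?thesis using Pm \<open>?P m \<le> ?P p0\<close> by simp
    qed
  qed
  have uniq: "p = p0" if "\<forall>p'. ?P p' \<le> ?P p" for p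
  proof -
    have a: "p / q \<in> {0<..<1} \<and> \<psi> (p / q) = c / q" by (rule profit_foc[OF q that])
    have b: "p0 / q \<in> {0<..<1} \<and> \<psi> (p0 / q) = c / q" by (rule profit_foc[OF q glob])
    have "p / q = p0 / q" using psi_inj[of "p/q" "p0/q"] a b qpos c_pos by auto
    then show ?thesis using qpos by (simp add: field_simps)
  qed
  have "opt_price F c q = p0" unfolding opt_price_def
    by (rule the_equality[where P="\<lambda>p. \<forall>p'. ?P p' \<le> ?P p", OF glob uniq])
  then show ?thesis using profit_foc[OF q glob] by simp
qed

abbreviation "vb \<equiv> opt_price_bar F c"

lemma vb_char: "c < q \<Longrightarrow> vb q \<in> {0<..<1} \<and> \<psi> (vb q) = c / q"
  using opt_price_char by (simp add: opt_price_bar_def)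

lemma vb_eq: assumes "c < q" "w \<in> {0<..<1}" "\<psi> w = c / q" shows "vb q = w"
  using psi_inj[of "vb q" w] vb_char[OF assms(1)] assms c_pos by auto


definition phi :: "real \<Rightarrow> real" where "phi v = c / \<psi> v"

lemma phi_props:
  assumes v: "v \<in> {0<..<1}" and pv: "\<psi> v > 0"
  shows "c < phi v" "vb (phi v) = v"
proof -
  have "\<psi> v < 1" using psi_lt[OF v] v by simp
  then show "c < phi v" unfolding phi_def using pv c_pos by (simp add: field_simps)
  show "vb (phi v) = v"
    by (rule vb_eq) (use \<open>c < phi v\<close> v pv c_pos in \<open>auto simp: phi_def\<close>)
qed

lemma phi_deriv:
  assumes v: "v \<in> {0<..<1}" and pv: "\<psi> v > 0"
  shows "DERIV phi v :> (0 * \<psi> v - c * \<psi>1 v) / (\<psi> v * \<psi> v)"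
  unfolding phi_def[abs_def]
  by (intro DERIV_divide DERIV_const psi_deriv' v) (use pv in auto)

lemma phi_vb: "c < q \<Longrightarrow> phi (vb q) = q"
  using vb_char[of q] c_pos by (simp add: phi_def)

lemma vb_isCont:
  assumes q: "c < q"
  shows "isCont vb q"
proof -
  define x where "x = vb q"
  have x01: "x \<in> {0<..<1}" and px: "\<psi> x = c / q" using vb_char[OF q] x_def by auto
  have pxpos: "\<psi> x > 0" using px q c_pos by simp
  have "eventually (\<lambda>z. \<psi> z > 0) (at x)"
    using order_tendstoD(1)[OF psi_isCont[OF x01, unfolded isCont_def] pxpos] .
  then obtain d0 where d0: "d0 > 0" "\<And>z. z \<noteq> x \<Longrightarrow> dist z x < d0 \<Longrightarrow> \<psi> z > 0"
    unfolding eventually_at by auto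
  define d where "d = min (d0 / 2) (min (x / 2) ((1 - x) / 2))"
  have dpos: "d > 0" using d0 x01 by (simp add: d_def)
  have near: "z \<in> {0<..<1} \<and> \<psi> z > 0" if "\<bar>z - x\<bar> \<le> d" for z
  proof -
    have h1: "\<bar>z - x\<bar> \<le> x/2" "\<bar>z - x\<bar> \<le> (1-x)/2" using that unfolding d_def by auto
    have "z \<in> {0<..<1}" using h1 x01 abs_ge_self[of "z-x"] abs_ge_minus_self[of "z-x"] by auto
    moreover have "\<psi> z > 0"
    proof (cases "z = x")
      case True then show ?thesis using pxpos by simp
    next
      case False
      have "\<bar>z - x\<bar> \<le> d0/2" using that unfolding d_def by auto
      then have "dist z x < d0" using d0(1) unfolding dist_real_def by linarith
      then show ?thesis using d0 False by auto
    qed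
    ultimately show ?thesis by simp
  qed
  have h1: "vb (phi z) = z" if "\<bar>z - x\<bar> \<le> d" for z
    using phi_props near[OF that] by simp
  have h2: "isCont phi z" if "\<bar>z - x\<bar> \<le> d" for z
    using phi_deriv near[OF that] DERIV_isCont by blast
  have "isCont vb (phi x)" by (rule isCont_inverse_function[OF dpos h1 h2])
  then show ?thesis using phi_vb[OF q] x_def by simp
qed

definition vb' :: "real \<Rightarrow> real" where
  "vb' q = inverse ((0 * \<psi> (vb q) - c * \<psi>1 (vb q)) / (\<psi> (vb q) * \<psi> (vb q)))"

lemma psi1_vb_pos: "c < q \<Longrightarrow> \<psi>1 (vb q) > 0"
  using vb_char[of q] psi_mono[of "vb q"] c_pos by auto

lemma vb_deriv:
  assumes q: "c < q"
  shows "DERIV vb q :> vb' q"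
  unfolding vb'_def
proof (rule DERIV_inverse_function[where a=c and b="q+1"])
  have x: "vb q \<in> {0<..<1}" "\<psi> (vb q) > 0" using vb_char[OF q] q c_pos by auto
  show "DERIV phi (vb q) :> (0 * \<psi> (vb q) - c * \<psi>1 (vb q)) / (\<psi> (vb q) * \<psi> (vb q))"
    by (rule phi_deriv[OF x])
  show "(0 * \<psi> (vb q) - c * \<psi>1 (vb q)) / (\<psi> (vb q) * \<psi> (vb q)) \<noteq> 0"
    using psi1_vb_pos[OF q] c_pos x by simp
  show "c < q" "q < q + 1" using q by auto
  show "phi (vb y) = y" if "c < y" "y < q + 1" for y using phi_vb that by simp
  show "isCont vb q" by (rule vb_isCont[OF q])
qed

lemma psi_vb_pos: "c < q \<Longrightarrow> \<psi> (vb q) > 0"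
  using vb_char[of q] c_pos by auto

lemma vb'_neg: "c < q \<Longrightarrow> vb' q < 0"
  using psi1_vb_pos[of q] psi_vb_pos[of q] c_pos
  by (auto simp: vb'_def divide_simps)


definition G :: "real \<Rightarrow> real" where "G x = integral {x..1} (\<lambda>v. 1 - F v)"

lemma oneF_cont: "continuous_on A (\<lambda>v. 1 - F v)"
proof -
  have "continuous_on A F" using F_cont continuous_on_subset by blast
  then show ?thesis by (intro continuous_intros)
qed

lemma G_deriv: "x \<in> {0<..<1} \<Longrightarrow> DERIV G x :> - (1 - F x)"
proof -
  assume x: "x \<in> {0<..<1}"
  have "((\<lambda>x. integral {x..1} (\<lambda>v. 1 - F v)) has_real_derivative - (1 - F x)) (at x within {0..1})"
    by (rule integral_has_real_derivative'[OF oneF_cont]) (use x in auto)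
  then show ?thesis using x by (simp add: at_within_Icc_at G_def[abs_def])
qed

lemma CS_eq:
  assumes q: "c < q"
  shows "CS F f c q = q * G (vb q)"
proof -
  define x where "x = vb q"
  have qpos: "q > 0" using q c_pos by simp
  have x01: "x \<in> {0<..<1}" using vb_char[OF q] x_def by auto
  have op: "opt_price F c q = q * x" using qpos by (simp add: x_def opt_price_bar_def)
  define h where "h v = (v - x) * (F v - 1)" for v
  have Fc: "continuous_on {x..1} F" using F_cont continuous_on_subset by blast
  have hcont: "continuous_on {x..1} h" unfolding h_def[abs_def]
    by (intro continuous_intros Fc)
  have hder: "(h has_vector_derivative ((F v - 1) + f v * (v - x))) (at v)" if "v \<in> {x<..<1}" for v
  proof -
    have v: "v \<in> {0<..<1}" using that x01 by auto
    have "DERIV h v :> (1 - 0) * (F v - 1) + (f v - 0) * (v - x)"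
      unfolding h_def[abs_def] by (intro DERIV_mult DERIV_diff DERIV_ident DERIV_const F_dens v)
    then show ?thesis by (simp add: has_real_derivative_iff_has_vector_derivative)
  qed
  have "((\<lambda>v. (F v - 1) + f v * (v - x)) has_integral (h 1 - h x)) {x..1}"
    by (rule fundamental_theorem_of_calculus_interior[OF _ hcont hder]) (use x01 in auto)
  moreover have "h 1 - h x = 0" by (simp add: h_def F_high)
  moreover have "((\<lambda>v. 1 - F v) has_integral G x) {x..1}"
    unfolding G_def by (rule integrable_integral, rule integrable_continuous_interval, rule oneF_cont)
  ultimately have "((\<lambda>v. ((F v - 1) + f v * (v - x)) + (1 - F v)) has_integral (0 + G x)) {x..1}"
    using has_integral_add[of "\<lambda>v. (F v - 1) + f v * (v - x)" 0 "{x..1}" "\<lambda>v. 1 - F v" "G x"] by simp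
  then have "((\<lambda>v. q * (((F v - 1) + f v * (v - x)) + (1 - F v))) has_integral (q * G x)) {x..1}"
    using has_integral_mult_right[of _ "G x" "{x..1}" q] by simp
  moreover have "(\<lambda>v. q * (((F v - 1) + f v * (v - x)) + (1 - F v))) = (\<lambda>v. (v * q - opt_price F c q) * f v)"
  proof
    fix v show "q * (((F v - 1) + f v * (v - x)) + (1 - F v)) = (v * q - opt_price F c q) * f v"
      unfolding op by (simp add: algebra_simps)
  qed
  ultimately have "((\<lambda>v. (v * q - opt_price F c q) * f v) has_integral (q * G x)) {x..1}" by simp
  then show ?thesis unfolding CS_def using x_def
    by (simp add: integral_unique opt_price_bar_def)
qed


definition H :: "real \<Rightarrow> real" where "H x = G x + (1 - F x) * \<psi> x / \<psi>1 x"
definition H1 :: "real \<Rightarrow> real" where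
  "H1 x = - (f x * \<psi> x * (1 - r1 x - r x * r2 x)) / (\<psi>1 x)^2"
definition D :: "real \<Rightarrow> real" where "D q = H (vb q)"

lemma CS_deriv:
  assumes q: "c < q"
  shows "DERIV (CS F f c) q :> D q"
proof -
  define x where "x = vb q"
  have qpos: "q > 0" using q c_pos by simp
  have x01: "x \<in> {0<..<1}" and px: "\<psi> x = c / q" using vb_char[OF q] x_def by auto
  have pxpos: "\<psi> x > 0" using px q c_pos by simp
  have p1: "\<psi>1 x > 0" using psi1_vb_pos[OF q] x_def by simp
  have dGv: "DERIV (\<lambda>q. G (vb q)) q :> - (1 - F (vb q)) * vb' q"
    by (rule DERIV_chain2[OF G_deriv vb_deriv[OF q]]) (use x01 x_def in simp)
  have "DERIV (\<lambda>q. q * G (vb q)) q :> 1 * G (vb q) + (- (1 - F (vb q)) * vb' q) * q"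
    by (intro DERIV_mult DERIV_ident dGv)
  moreover have "vb' q * q = - (\<psi> x / \<psi>1 x)"
  proof -
    have e: "\<psi> x * q = c" using px qpos by (simp add: field_simps)
    have "vb' q * q = - (\<psi> x * \<psi> x * q) / (c * \<psi>1 x)"
      unfolding vb'_def x_def[symmetric] using c_pos p1 pxpos by (simp add: field_simps)
    also have "\<dots> = - (\<psi> x * c) / (c * \<psi>1 x)" using e by (simp add: mult.assoc)
    also have "\<dots> = - (\<psi> x / \<psi>1 x)" using c_pos by simp
    finally show ?thesis .
  qed
  moreover have "1 * G (vb q) + (- (1 - F (vb q)) * vb' q) * q = H x"
  proof -
    have "1 * G (vb q) + (- (1 - F (vb q)) * vb' q) * q = G x - (1 - F x) * (vb' q * q)"
      by (simp add: x_def algebra_simps)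
    also have "\<dots> = G x + (1 - F x) * (\<psi> x / \<psi>1 x)" using \<open>vb' q * q = - (\<psi> x / \<psi>1 x)\<close> by simp
    also have "\<dots> = H x" by (simp add: H_def)
    finally show ?thesis .
  qed
  ultimately have "DERIV (\<lambda>q. q * G (vb q)) q :> H x" by simp
  then have "DERIV (\<lambda>q. q * G (vb q)) q :> D q" by (simp add: D_def x_def)
  then show ?thesis
    by (rule has_field_derivative_transform_within_open[where S="{c<..}"]) (use q CS_eq in auto)
qed

lemma H1_alg:
  fixes R Fd P P1 R2 :: real
  assumes "P1 \<noteq> 0"
  shows "- (R * Fd) + (((0 - Fd) * P + P1 * (R * Fd)) * P1 - ((R * Fd) * P) * (- R2)) / (P1 * P1)
       = - (Fd * P * (P1 - R * R2)) / P1^2"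
  using assms by (simp add: field_simps power2_eq_square)

lemma H_deriv:
  assumes x: "x \<in> {0<..<1}" and px: "\<psi> x > 0"
  shows "DERIV H x :> H1 x"
proof -
  have p1: "\<psi>1 x > 0" using psi_mono[OF x px] .
  have "DERIV H x :> - (1 - F x) + (((0 - f x) * \<psi> x + \<psi>1 x * (1 - F x)) * \<psi>1 x - ((1 - F x) * \<psi> x) * (- r2 x)) / (\<psi>1 x * \<psi>1 x)"
    unfolding H_def[abs_def]
    by (intro DERIV_add DERIV_divide DERIV_mult DERIV_diff DERIV_const G_deriv F_dens psi_deriv' psi1_deriv x)
       (use p1 in auto)
  moreover have "- (1 - F x) + (((0 - f x) * \<psi> x + \<psi>1 x * (1 - F x)) * \<psi>1 x - ((1 - F x) * \<psi> x) * (- r2 x)) / (\<psi>1 x * \<psi>1 x) = H1 x"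
    unfolding one_minus_F[OF x] H1_def H1_alg[of "\<psi>1 x", OF p1[THEN less_imp_neq, symmetric]]
    using psi1_eq[OF x] by simp
  ultimately show ?thesis by simp
qed

lemma D_deriv: "c < q \<Longrightarrow> DERIV D q :> H1 (vb q) * vb' q"
  unfolding D_def[abs_def]
  by (rule DERIV_chain2[OF H_deriv vb_deriv]) (use vb_char psi_vb_pos in auto)

lemma H1_sign:
  assumes x: "x \<in> {0<..<1}" and px: "\<psi> x > 0"
  shows "H1 x \<le> 0 \<longleftrightarrow> r x * r2 x + r1 x \<le> 1"
proof -
  have p1: "\<psi>1 x > 0" using psi_mono[OF x px] .
  define A where "A = f x * \<psi> x / (\<psi>1 x)^2"
  define B where "B = 1 - r1 x - r x * r2 x"
  have pos: "A > 0" using f_pos[OF x] px p1 by (simp add: A_def)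
  have "H1 x = - (A * B)" by (simp add: H1_def A_def B_def)
  then have "H1 x \<le> 0 \<longleftrightarrow> 0 \<le> A * B" by simp
  also have "\<dots> \<longleftrightarrow> 0 \<le> B" using pos by (simp add: zero_le_mult_iff)
  finally show ?thesis unfolding B_def by linarith
qed


lemma vb_anti:
  assumes "c < q1" "q1 < q2"
  shows "vb q2 < vb q1"
proof (rule ccontr)
  assume "\<not> vb q2 < vb q1"
  then have le: "vb q1 \<le> vb q2" by simp
  have c1: "vb q1 \<in> {0<..<1}" "\<psi> (vb q1) = c / q1" using vb_char assms by auto
  have c2: "vb q2 \<in> {0<..<1}" "\<psi> (vb q2) = c / q2" using vb_char assms by auto
  have "\<psi> (vb q1) \<le> \<psi> (vb q2)"
    by (rule psi_mono_weak) (use c1 c2 le psi_vb_pos[of q1] assms in auto)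
  moreover have "c / q2 < c / q1" using assms c_pos by (simp add: frac_less2)
  ultimately show False using c1 c2 by simp
qed

lemma D_isCont: "c < q \<Longrightarrow> isCont D q"
  using D_deriv DERIV_isCont by blast

end

theorem lemma3:
  fixes F f :: "real \<Rightarrow> real" and q_l q_h c :: real
  assumes q_pos: "0 < q_l" and q_lt: "q_l < q_h"
    and c_pos: "0 < c" and c_lt: "c < q_l"
    and F_cont: "continuous_on UNIV F"
    and F_low: "\<And>v. v \<le> 0 \<Longrightarrow> F v = 0"
    and F_high: "\<And>v. 1 \<le> v \<Longrightarrow> F v = 1"
    and F_dens: "\<And>v. v \<in> {0<..<1} \<Longrightarrow> (F has_real_derivative f v) (at v)"
    and f_pos: "\<And>v. v \<in> {0<..<1} \<Longrightarrow> f v > 0"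
    and f_diff: "\<And>v. v \<in> {0<..<1} \<Longrightarrow> f differentiable (at v)"
    and f'_diff: "\<And>v. v \<in> {0<..<1} \<Longrightarrow> (deriv f) differentiable (at v)"
    and f''_cont: "continuous_on {0<..<1} (deriv (deriv f))"
    and psi_mono: "\<And>v. v \<in> {0<..<1} \<Longrightarrow> virt_val F f v > 0 \<Longrightarrow>
                     deriv (virt_val F f) v > 0"
    and p_unique: "\<And>q. q \<in> {q_l..q_h} \<Longrightarrow>
                     \<exists>!p. \<forall>p'. profit F c q p' \<le> profit F c q p"
  shows "convex_on {q_l..q_h} (CS F f c) \<longleftrightarrow>
    (\<forall>v \<in> {opt_price_bar F c q_h<..<opt_price_bar F c q_l}.
        inv_hazard F f v * deriv (deriv (inv_hazard F f)) v
          + deriv (inv_hazard F f) v \<le> 1)"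
proof -
  interpret S: setting F f c
    by (rule setting.intro) (use c_pos F_cont F_low F_high F_dens f_pos f_diff f'_diff psi_mono in auto)
  let ?vb = "opt_price_bar F c"
  let ?r = "inv_hazard F f"
  have ca: "c < q_l" and cb: "c < q_h" using c_lt q_lt by auto
  show ?thesis
  proof
    assume conv: "convex_on {q_l..q_h} (CS F f c)"
    show "\<forall>v \<in> {?vb q_h<..<?vb q_l}. ?r v * deriv (deriv ?r) v + deriv ?r v \<le> 1"
    proof
      fix v assume v: "v \<in> {?vb q_h<..<?vb q_l}"
      have vbh: "?vb q_h \<in> {0<..<1}" "virt_val F f (?vb q_h) = c / q_h" using S.vb_char[OF cb] by auto
      have vbl: "?vb q_l \<in> {0<..<1}" "virt_val F f (?vb q_l) = c / q_l" using S.vb_char[OF ca] by auto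
      have v01: "v \<in> {0<..<1}" using v vbh vbl by auto
      have "c / q_h < virt_val F f v"
        using S.psi_mono_strict[of "?vb q_h" v] vbh v v01 S.psi_vb_pos[OF cb] by auto
      moreover have pv: "virt_val F f v > 0" using calculation c_pos cb by (smt (verit) divide_pos_pos)
      moreover have "virt_val F f v < c / q_l"
        using S.psi_mono_strict[of v "?vb q_l"] vbl v v01 pv by auto
      ultimately have lo: "c / q_h < virt_val F f v" and hi: "virt_val F f v < c / q_l" by auto
      define q where "q = S.phi v"
      have qa: "q_l < q" unfolding q_def S.phi_def using hi pv c_pos q_pos by (simp add: field_simps)
      have qb: "q < q_h" unfolding q_def S.phi_def using lo pv c_pos q_pos q_lt by (simp add: field_simps)
      have vq: "?vb q = v" using S.phi_props[OF v01 pv] q_def by simp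
      have cq: "c < q" using qa ca by simp
      have Dmono: "S.D x \<le> S.D y" if "q_l < x" "x < y" "y < q_h" for x y
      proof -
        have dx: "(CS F f c has_field_derivative S.D x) (at x within {q_l..q_h})"
          using S.CS_deriv[of x] that ca has_field_derivative_at_within by auto
        have dy: "(CS F f c has_field_derivative S.D y) (at y within {q_l..q_h})"
          using S.CS_deriv[of y] that ca has_field_derivative_at_within by auto
        have t1: "CS F f c y - CS F f c x \<ge> S.D x * (y - x)"
          by (rule convex_on_imp_above_tangent[OF conv connected_Icc _ _ dx]) (use that in auto)
        have t2: "CS F f c x - CS F f c y \<ge> S.D y * (x - y)"
          by (rule convex_on_imp_above_tangent[OF conv connected_Icc _ _ dy]) (use that in auto)
        have "S.D x * (y - x) \<le> S.D y * (y - x)" using t1 t2 by (simp add: algebra_simps)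
        then show ?thesis using that by simp
      qed
      have "S.H1 v * S.vb' q \<ge> 0"
      proof (rule ccontr)
        assume "\<not> S.H1 v * S.vb' q \<ge> 0"
        then have neg: "S.H1 (?vb q) * S.vb' q < 0" using vq by simp
        from DERIV_neg_dec_right[OF S.D_deriv[OF cq] neg] obtain d where
          d: "d > 0" "\<And>h. h > 0 \<Longrightarrow> h < d \<Longrightarrow> S.D q > S.D (q + h)" by blast
        define h where "h = min d (q_h - q) / 2"
        have h: "h > 0" "h < d" "q + h < q_h" unfolding h_def using d(1) qb by (auto simp: min_def field_simps)
        have "S.D q \<le> S.D (q + h)" by (rule Dmono) (use qa h in auto)
        with d(2)[OF h(1,2)] show False by simp
      qed
      moreover have "S.vb' q < 0" using S.vb'_neg[OF cq] .
      ultimately have "S.H1 v \<le> 0" by (smt (verit) mult_pos_neg)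
      then show "?r v * deriv (deriv ?r) v + deriv ?r v \<le> 1" using S.H1_sign[OF v01 pv] by simp
    qed
  next
    assume cond: "\<forall>v \<in> {?vb q_h<..<?vb q_l}. ?r v * deriv (deriv ?r) v + deriv ?r v \<le> 1"
    show "convex_on {q_l..q_h} (CS F f c)"
    proof (rule convex_on_realI[where f'=S.D])
      show "connected {q_l..q_h}" by simp
      show "(CS F f c has_real_derivative S.D x) (at x)" if "x \<in> {q_l..q_h}" for x
        using S.CS_deriv[of x] that ca by auto
      show "S.D x \<le> S.D y" if "x \<in> {q_l..q_h}" "y \<in> {q_l..q_h}" "x \<le> y" for x y
      proof (rule DERIV_nonneg_imp_increasing_open[OF that(3)])
        show "continuous_on {x..y} S.D"
          using S.D_isCont that ca by (intro continuous_at_imp_continuous_on) auto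
        fix z assume z: "x < z" "z < y"
        have cz: "c < z" using z that ca by auto
        have z1: "?vb z < ?vb q_l" using S.vb_anti[of q_l z] z that ca by auto
        have z2: "?vb q_h < ?vb z" using S.vb_anti[of z q_h] z that cz by auto
        have vz: "?vb z \<in> {0<..<1}" using S.vb_char[OF cz] by auto
        have "?r (?vb z) * deriv (deriv ?r) (?vb z) + deriv ?r (?vb z) \<le> 1" using cond z1 z2 by auto
        then have "S.H1 (?vb z) \<le> 0" using S.H1_sign[OF vz S.psi_vb_pos[OF cz]] by simp
        moreover have "S.vb' z < 0" using S.vb'_neg[OF cz] .
        ultimately have "S.H1 (?vb z) * S.vb' z \<ge> 0" by (simp add: mult_nonpos_nonpos)
        then show "\<exists>y. DERIV S.D z :> y \<and> y \<ge> 0" using S.D_deriv[OF cz] by blast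
      qed
    qed
  qed
qed

end
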